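(* Let $f$, $f^{-1}$ be as in the context, and let $\Phi$ be a finite set of materials, each given by a Young's modulus $E>0$ and a density $\rho>0$. Fix a design domain of length $L>0$, height $h>0$ and imposed thickness $t>0$, a load $F>0$ and a maximal allowed deflection $\delta_{\max}>0$, and assume $tE\delta_{\max}/F\ge f(1)$ for every material $(E,\rho)\in\Phi$. For a material $(E,\rho)$ the minimal mass of a design meeting the deflection constraint is $M(E,\rho)=L\,h\,t\,\rho\,f^{-1}\!\left(\frac{tE\delta_{\max}}{F}\right)$. Let $(E_1,\rho_1)\in\Phi$ be a material with the lowest ratio $\rho/E$ in $\Phi$, and let $(E_2,\rho_2)\in\Phi$ be the optimal material, i.e. the material whose mass $M(E_2,\rho_2)$ (equivalently, whose index $\rho_2 f^{-1}(tE_2\delta_{\max}/F)$) is strictly smaller than that of every other material of $\Phi$. Then $\rho_2\ge\rho_1$.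
   Context: For a volume fraction $V_f\in(0,1]$ (ratio of design volume to design-domain volume), $f(V_f)$ denotes the globally optimal compliance attainable by a design of volume fraction $V_f$ in the given compliance topology optimization problem, computed for unit load, unit thickness and unit Young's modulus (the compliance--volume fraction Pareto front); for general load, thickness and modulus the compliance is $f(V_f)F^2/(tE)$ and the deflection at the load point is $f(V_f)F/(tE)$. Standing assumptions on $f$: $f$ is differentiable on $(0,1]$ with $f'<0$, $f(V_f)\to+\infty$ as $V_f\searrow0$, so $f$ is a bijection $(0,1]\to[f(1),+\infty[$ with decreasing inverse $f^{-1}$; and the efficiency ratio $n(V_f)=-V_f f'(V_f)/f(V_f)$ satisfies $n(V_f)\le 1$ for all $V_f\in(0,1]$. *)

theory Defs
  imports "HOL-Analysis.Analysis"
begin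

definition finv :: "(real \<Rightarrow> real) \<Rightarrow> real \<Rightarrow> real" where
  "finv f y = inv_into {0<..1} f y"

definition min_mass :: "(real \<Rightarrow> real) \<Rightarrow> real \<Rightarrow> real \<Rightarrow> real \<Rightarrow> real \<Rightarrow> real \<Rightarrow> real \<times> real \<Rightarrow> real" where
  "min_mass f L h t F dmax m = L * h * t * snd m * finv f (t * fst m * dmax / F)"

end

theory Submission
  imports Defs
begin

lemma deriv_at_interior:
  assumes "\<And>V. V \<in> {0<..1} \<Longrightarrow> (f has_real_derivative f' V) (at V within {0<..1})"
    and "0 < x" "x < 1"
  shows "(f has_real_derivative f' x) (at x)"
proof -
  have "(f has_real_derivative f' x) (at x within {0<..<1})"
    by (rule has_field_derivative_subset[OF assms(1)]) (use assms(2,3) in auto)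
  moreover have "at x within {0<..<(1::real)} = at x" using assms(2,3) by (intro at_within_open) auto
  ultimately show ?thesis by simp
qed

lemma cont_sub:
  assumes "\<And>V. V \<in> {0<..1} \<Longrightarrow> (f has_real_derivative f' V) (at V within {0<..1})"
    and "0 < a" "b \<le> 1"
  shows "continuous_on {a..b} f"
proof -
  have "continuous_on {0<..1} f"
    unfolding continuous_on_eq_continuous_within
    using assms(1) DERIV_continuous by blast
  then show ?thesis by (rule continuous_on_subset) (use assms in auto)
qed

theorem proposition1:
  fixes f f' :: "real \<Rightarrow> real"
    and \<Phi> :: "(real \<times> real) set"
    and L h t F dmax E1 \<rho>1 E2 \<rho>2 :: real
  assumes f_deriv: "\<And>V. V \<in> {0<..1} \<Longrightarrow> (f has_real_derivative f' V) (at V within {0<..1})"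
    and f'_neg: "\<And>V. V \<in> {0<..1} \<Longrightarrow> f' V < 0"
    and f_pos: "\<And>V. V \<in> {0<..1} \<Longrightarrow> f V > 0"
    and f_lim: "filterlim f at_top (at_right 0)"
    and f_bij: "bij_betw f {0<..1} {f 1..}"
    and n_le1: "\<And>V. V \<in> {0<..1} \<Longrightarrow> - V * f' V / f V \<le> 1"
    and \<Phi>_fin: "finite \<Phi>"
    and \<Phi>_pos: "\<And>E \<rho>. (E, \<rho>) \<in> \<Phi> \<Longrightarrow> E > 0 \<and> \<rho> > 0"
    and L: "L > 0" and h: "h > 0" and t: "t > 0" and F: "F > 0" and dmax: "dmax > 0"
    and feas: "\<And>E \<rho>. (E, \<rho>) \<in> \<Phi> \<Longrightarrow> t * E * dmax / F \<ge> f 1"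
    and m1: "(E1, \<rho>1) \<in> \<Phi>"
    and m1_min: "\<And>E \<rho>. (E, \<rho>) \<in> \<Phi> \<Longrightarrow> \<rho>1 / E1 \<le> \<rho> / E"
    and m2: "(E2, \<rho>2) \<in> \<Phi>"
    and m2_opt: "\<And>m. m \<in> \<Phi> \<Longrightarrow> m \<noteq> (E2, \<rho>2) \<Longrightarrow>
                    min_mass f L h t F dmax (E2, \<rho>2) < min_mass f L h t F dmax m"
  shows "\<rho>2 \<ge> \<rho>1"
proof (rule ccontr)
  assume neg: "\<not> \<rho>2 \<ge> \<rho>1"
  have decr: "f b < f a" if "0 < a" "a < b" "b \<le> 1" for a b
  proof -
    have "f a > f b"
    proof (rule DERIV_neg_imp_decreasing_open[OF \<open>a < b\<close>])
      fix x assume "a < x" "x < b"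
      then show "\<exists>y. DERIV f x :> y \<and> y < 0"
        using deriv_at_interior[OF f_deriv, of x] f'_neg[of x] that by auto
    next
      show "continuous_on {a..b} f" using cont_sub[OF f_deriv, of a b] that by simp
    qed
    then show ?thesis .
  qed
  have incr: "a * f a \<le> b * f b" if "0 < a" "a \<le> b" "b \<le> 1" for a b
  proof (cases "a = b")
    case True then show ?thesis by simp
  next
    case False
    then have ab: "a < b" using that by simp
    show ?thesis
    proof (rule DERIV_nonneg_imp_increasing_open[OF \<open>a \<le> b\<close>])
      fix x assume x: "a < x" "x < b"
      have d: "DERIV f x :> f' x"
        using deriv_at_interior[OF f_deriv, of x] x that by auto
      have "DERIV (\<lambda>x. x * f x) x :> 1 * f x + f' x * x"
        by (rule DERIV_mult[OF DERIV_ident d])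
      moreover have "1 * f x + f' x * x \<ge> 0"
      proof -
        have xi: "x \<in> {0<..1}" using x that by auto
        have "- x * f' x / f x \<le> 1" using n_le1[OF xi] .
        moreover have "- x * f' x = (- x * f' x / f x) * f x" using f_pos[OF xi] by simp
        ultimately have "- x * f' x \<le> 1 * f x"
          using f_pos[OF xi] by (metis less_imp_le mult_right_mono)
        then show ?thesis using mult.commute[of x "f' x"] by linarith
      qed
      ultimately show "\<exists>y. DERIV (\<lambda>x. x * f x) x :> y \<and> y \<ge> 0" by blast
    next
      show "continuous_on {a..b} (\<lambda>x. x * f x)"
        using cont_sub[OF f_deriv, of a b] that by (intro continuous_intros) auto
    qed
  qed
  have E1p: "E1 > 0" and r1p: "\<rho>1 > 0" using \<Phi>_pos[OF m1] by auto
  have E2p: "E2 > 0" and r2p: "\<rho>2 > 0" using \<Phi>_pos[OF m2] by auto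
  have rat: "\<rho>1 / E1 \<le> \<rho>2 / E2" using m1_min[OF m2] .
  then have "\<rho>1 * E2 \<le> \<rho>2 * E1" using E1p E2p by (simp add: divide_simps)
  then have "\<rho>1 * E2 < \<rho>1 * E1" using neg E1p
    using mult_strict_right_mono[of \<rho>2 \<rho>1 E1] by linarith
  then have E21: "E2 < E1" using r1p mult_less_cancel_left_pos by blast
  define c where "c = t * dmax / F"
  have cp: "c > 0" using t dmax F by (simp add: c_def)
  define y1 where "y1 = t * E1 * dmax / F"
  define y2 where "y2 = t * E2 * dmax / F"
  have y1c: "y1 = c * E1" and y2c: "y2 = c * E2" by (simp_all add: y1_def y2_def c_def)
  have y1i: "y1 \<in> {f 1..}" using feas[OF m1] y1_def by simp
  have y2i: "y2 \<in> {f 1..}" using feas[OF m2] y2_def by simp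
  define V1 where "V1 = finv f y1"
  define V2 where "V2 = finv f y2"
  have im1: "y1 \<in> f ` {0<..1}" using y1i f_bij by (simp add: bij_betw_def)
  have V1i: "V1 \<in> {0<..1}" unfolding V1_def finv_def by (rule inv_into_into[OF im1])
  have fV1: "f V1 = y1" unfolding V1_def finv_def by (rule f_inv_into_f[OF im1])
  have im2: "y2 \<in> f ` {0<..1}" using y2i f_bij by (simp add: bij_betw_def)
  have V2i: "V2 \<in> {0<..1}" unfolding V2_def finv_def by (rule inv_into_into[OF im2])
  have fV2: "f V2 = y2" unfolding V2_def finv_def by (rule f_inv_into_f[OF im2])
  have y21: "y2 < y1" using y1c y2c cp E21 by simp
  have V12: "V1 \<le> V2"
  proof (rule ccontr)
    assume "\<not> V1 \<le> V2"
    then have "f V1 < f V2" using decr[of V2 V1] V1i V2i by auto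
    then show False using fV1 fV2 y21 by simp
  qed
  have "V1 * y1 \<le> V2 * y2" using incr[of V1 V2] V12 V1i V2i fV1 fV2 by auto
  then have "c * (E1 * V1) \<le> c * (E2 * V2)" using y1c y2c by (simp add: algebra_simps)
  then have EV: "E1 * V1 \<le> E2 * V2" using cp by simp
  have "\<rho>1 * V1 = (\<rho>1 / E1) * (E1 * V1)" using E1p by simp
  also have "\<dots> \<le> (\<rho>1 / E1) * (E2 * V2)"
    using EV r1p E1p by (intro mult_left_mono) auto
  also have "\<dots> \<le> (\<rho>2 / E2) * (E2 * V2)"
    using rat E2p V2i by (intro mult_right_mono) auto
  also have "\<dots> = \<rho>2 * V2" using E2p by simp
  finally have rv: "\<rho>1 * V1 \<le> \<rho>2 * V2" .
  have "(E1, \<rho>1) \<noteq> (E2, \<rho>2)" using neg by auto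
  from m2_opt[OF m1 this]
  have "L * h * t * \<rho>2 * finv f (t * E2 * dmax / F) < L * h * t * \<rho>1 * finv f (t * E1 * dmax / F)"
    unfolding min_mass_def fst_conv snd_conv .
  then have "L * h * t * \<rho>2 * V2 < L * h * t * \<rho>1 * V1"
    unfolding V1_def V2_def y1_def y2_def .
  then have lt: "L * h * t * (\<rho>2 * V2) < L * h * t * (\<rho>1 * V1)"
    by (simp only: mult.assoc)
  have "L * h * t * (\<rho>1 * V1) \<le> L * h * t * (\<rho>2 * V2)"
    using rv L h t by (intro mult_left_mono) auto
  with lt show False by linarith
qed

end
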